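(* Let $\mathbb{X}$ be a Banach space, $\varphi:\mathbb{X}\to\mathbb{R}\cup\{+\infty\}$ a proper lower semicontinuous function, $\mathbf{S}_\varphi:=\{x:\varphi(x)\le0\}$, $\tau>0$ and $x\in\mathbf{S}_\varphi$. Then $$\mathbf{e}\big(\{h\in\mathbb{X}:\varphi'_H(x;h)\le1\},\ \mathbf{T}^{\mathbf B}(\mathbf{S}_\varphi,x)\big)\le\tau$$ holds if and only if $$\mathbf{d}\big(h,\mathbf{T}^{\mathbf B}(\mathbf{S}_\varphi,x)\big)\le\tau\max\{\varphi'_H(x;h),0\}\quad\text{for all }h\in\mathbb{X}.$$
   Context: $\mathbf{d}(x,D):=\inf\{\|x-y\|:y\in D\}$. Excess: $\mathbf{e}(C,D):=\sup_{x\in C}\mathbf{d}(x,D)$, with $\mathbf{e}(\emptyset,D)=0$ if $D\ne\emptyset$ and $=\infty$ otherwise. $\varphi'_H(x;h):=\liminf_{t\to0^+,\,h'\to h}\frac{\varphi(x+th')-\varphi(x)}{t}$. Bouligand tangent cone $\mathbf{T}^{\mathbf B}(C,c)$: the set of all $v$ such that there exist $v_n\to v$, $t_n\downarrow0$ with $c+t_nv_n\in C$ for all $n$. *)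

theory Defs
  imports "HOL-Analysis.Analysis"
begin

text \<open>Functions with values in R \<union> {+\<infinity>} are modelled as ereal-valued functions
  that never take the value -\<infinity>.\<close>

definition proper_fun :: "('a \<Rightarrow> ereal) \<Rightarrow> bool" where
  "proper_fun f \<longleftrightarrow> (\<forall>x. f x \<noteq> -\<infinity>) \<and> (\<exists>x. f x \<noteq> \<infinity>)"

definition lsc_fun :: "('a::topological_space \<Rightarrow> ereal) \<Rightarrow> bool" where
  "lsc_fun f \<longleftrightarrow> (\<forall>x. f x \<le> Liminf (at x) f)"

text \<open>Distance from a point to a set: inf of norms (= +\<infinity> for the empty set).\<close>
definition dset :: "'a::real_normed_vector \<Rightarrow> 'a set \<Rightarrow> ereal" where
  "dset x D = (INF y\<in>D. ereal (norm (x - y)))"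

definition excess :: "'a::real_normed_vector set \<Rightarrow> 'a set \<Rightarrow> ereal" where
  "excess C D = (if C = {} then (if D \<noteq> {} then 0 else \<infinity>) else (SUP x\<in>C. dset x D))"

definition hadamard_lower :: "('a::real_normed_vector \<Rightarrow> ereal) \<Rightarrow> 'a \<Rightarrow> 'a \<Rightarrow> ereal" where
  "hadamard_lower f x h =
     Liminf (at_right (0::real) \<times>\<^sub>F nhds h) (\<lambda>(t, h'). (f (x + t *\<^sub>R h') - f x) / ereal t)"

definition bouligand_cone :: "'a::real_normed_vector set \<Rightarrow> 'a \<Rightarrow> 'a set" where
  "bouligand_cone C c = {v. \<exists>vs ts. vs \<longlonglongrightarrow> v \<and> ts \<longlonglongrightarrow> 0 \<and> (\<forall>n. ts n > (0::real))
       \<and> (\<forall>n. c + ts n *\<^sub>R vs n \<in> C)}"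

end

theory Submission
  imports Defs
begin

lemma Liminf_filter_anti:
  assumes "F \<le> G"
  shows "Liminf G f \<le> Liminf F f"
  unfolding Liminf_def
  by (rule SUP_subset_mono) (use assms in \<open>auto simp: le_filter_def\<close>)

lemma cone_zero:
  assumes "x \<in> C"
  shows "0 \<in> bouligand_cone C x"
  unfolding bouligand_cone_def
  by (rule CollectI, rule exI[of _ "\<lambda>n. 0"], rule exI[of _ "\<lambda>n. inverse (real (Suc n))"])
     (intro conjI allI LIMSEQ_inverse_real_of_nat tendsto_const, simp_all add: assms)

lemma cone_scale:
  assumes "v \<in> bouligand_cone C x" "s > 0"
  shows "s *\<^sub>R v \<in> bouligand_cone C x"
proof -
  from assms(1) obtain vs ts where h: "vs \<longlonglongrightarrow> v" "ts \<longlonglongrightarrow> 0" "\<forall>n. ts n > (0::real)"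
    "\<forall>n. x + ts n *\<^sub>R vs n \<in> C" unfolding bouligand_cone_def by blast
  have "(\<lambda>n. s *\<^sub>R vs n) \<longlonglongrightarrow> s *\<^sub>R v" by (intro tendsto_intros h)
  moreover have "(\<lambda>n. ts n / s) \<longlonglongrightarrow> 0" using tendsto_divide_zero[OF h(2)] by simp
  moreover have "\<forall>n. ts n / s > 0" using h(3) assms(2) by simp
  moreover have "\<forall>n. x + (ts n / s) *\<^sub>R (s *\<^sub>R vs n) \<in> C" using h(4) assms(2) by simp
  ultimately show ?thesis unfolding bouligand_cone_def by blast
qed

lemma dset_nonneg: "0 \<le> dset h D"
  unfolding dset_def by (rule INF_greatest) simp

lemma dset_le: "y \<in> D \<Longrightarrow> dset h D \<le> ereal (norm (h - y))"
  unfolding dset_def by (rule INF_lower) 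

lemma dset_scale:
  assumes "s > 0"
  shows "ereal s * dset h (bouligand_cone C x) \<le> dset (s *\<^sub>R h) (bouligand_cone C x)"
  unfolding dset_def[of "s *\<^sub>R h"]
proof (rule INF_greatest)
  fix y assume y: "y \<in> bouligand_cone C x"
  have "(1/s) *\<^sub>R y \<in> bouligand_cone C x" using cone_scale[OF y] assms by simp
  then have "dset h (bouligand_cone C x) \<le> ereal (norm (h - (1/s) *\<^sub>R y))" by (rule dset_le)
  then have "ereal s * dset h (bouligand_cone C x) \<le> ereal s * ereal (norm (h - (1/s) *\<^sub>R y))"
    using assms by (intro ereal_mult_left_mono) auto
  also have "ereal s * ereal (norm (h - (1/s) *\<^sub>R y)) = ereal (norm (s *\<^sub>R h - y))"
  proof -
    have "s *\<^sub>R (h - (1/s) *\<^sub>R y) = s *\<^sub>R h - y" using assms by (simp add: algebra_simps)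
    then have "norm (s *\<^sub>R h - y) = s * norm (h - (1/s) *\<^sub>R y)"
      using assms by (metis norm_scaleR abs_of_pos)
    then show ?thesis by simp
  qed
  finally show "ereal s * dset h (bouligand_cone C x) \<le> ereal (norm (s *\<^sub>R h - y))" .
qed

lemma ereal_div_scale:
  fixes a :: ereal
  assumes "t > 0" "s > 0"
  shows "a / ereal (t / s) = ereal s * (a / ereal t)"
proof -
  have "ereal (s / t) = ereal s * ereal (1 / t)" by simp
  then show ?thesis using assms by (simp add: divide_ereal_def mult_ac divide_inverse)
qed

lemma hadamard_scale:
  fixes \<phi> :: "'a::real_normed_vector \<Rightarrow> ereal"
  assumes "s > 0"
  shows "hadamard_lower \<phi> x (s *\<^sub>R h) \<le> ereal s * hadamard_lower \<phi> x h"
proof -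
  define g where "g = (\<lambda>(t::real, h'). (\<phi> (x + t *\<^sub>R h') - \<phi> x) / ereal t)"
  define F where "F = at_right (0::real) \<times>\<^sub>F nhds h"
  define G where "G = at_right (0::real) \<times>\<^sub>F nhds (s *\<^sub>R h)"
  define m where "m = (\<lambda>(t::real, h'::'a). (t / s, s *\<^sub>R h'))"
  have lim1: "filterlim (\<lambda>z. fst z / s) (at_right 0) F"
  proof (rule tendsto_imp_filterlim_at_right)
    have "filterlim fst (at_right (0::real)) F" unfolding F_def by (rule filterlim_fst)
    then have "(fst \<longlongrightarrow> 0) F" using filterlim_mono[OF _ at_within_le_nhds order_refl] by blast
    then show "((\<lambda>z. fst z / s) \<longlongrightarrow> 0) F" using tendsto_divide_zero by blast
    have "eventually (\<lambda>z. fst z > 0) F"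
      using \<open>filterlim fst (at_right (0::real)) F\<close> unfolding filterlim_at by (elim conjE) (erule eventually_mono, simp)
    then show "eventually (\<lambda>z. fst z / s > 0) F" by eventually_elim (use assms in auto)
  qed
  have lim2: "filterlim (\<lambda>z. s *\<^sub>R snd z) (nhds (s *\<^sub>R h)) F"
  proof -
    have "filterlim snd (nhds h) F" unfolding F_def by (rule filterlim_snd)
    then show ?thesis by (intro tendsto_intros)
  qed
  have "filterlim m G F" unfolding G_def m_def case_prod_unfold
    by (rule filterlim_Pair[OF lim1 lim2])
  then have "filtermap m F \<le> G" by (simp add: filterlim_def)
  have "hadamard_lower \<phi> x (s *\<^sub>R h) = Liminf G g" unfolding hadamard_lower_def g_def G_def ..
  also have "\<dots> \<le> Liminf (filtermap m F) g" by (rule Liminf_filter_anti) fact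
  also have "\<dots> \<le> Liminf F (\<lambda>z. g (m z))" by (rule Liminf_filtermap_le)
  also have "\<dots> = Liminf F (\<lambda>z. ereal s * g z)"
  proof (rule Liminf_eq)
    have "filterlim fst (at_right (0::real)) F" unfolding F_def by (rule filterlim_fst)
    then have "eventually (\<lambda>z. fst z > 0) F" unfolding filterlim_at by (elim conjE) (erule eventually_mono, simp)
    then show "eventually (\<lambda>z. g (m z) = ereal s * g z) F"
    proof eventually_elim
      case (elim z)
      obtain t h' where z: "z = (t, h')" by (cases z)
      have "x + (t / s) *\<^sub>R (s *\<^sub>R h') = x + t *\<^sub>R h'" using assms by simp
      then show ?case using elim assms z ereal_div_scale[of t s] by (simp add: g_def m_def)
    qed
  qed
  also have "\<dots> = ereal s * Liminf F g"
    by (rule Liminf_ereal_mult_left) (use assms in \<open>auto simp: F_def prod_filter_eq_bot\<close>)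
  also have "Liminf F g = hadamard_lower \<phi> x h" unfolding hadamard_lower_def g_def F_def ..
  finally show ?thesis .
qed

lemma scale_div:
  assumes "s > 0" "0 \<le> d" "ereal s * d \<le> ereal c"
  shows "d \<le> ereal (c / s)"
  using assms by (cases d) (auto simp: field_simps)

theorem proposition4p1:
  fixes \<phi> :: "'a::banach \<Rightarrow> ereal" and \<tau> :: real and x :: 'a
  assumes "proper_fun \<phi>" and "lsc_fun \<phi>" and "\<tau> > 0" and "x \<in> {y. \<phi> y \<le> 0}"
  shows "excess {h. hadamard_lower \<phi> x h \<le> 1} (bouligand_cone {y. \<phi> y \<le> 0} x) \<le> ereal \<tau>
     \<longleftrightarrow> (\<forall>h. dset h (bouligand_cone {y. \<phi> y \<le> 0} x)
              \<le> ereal \<tau> * max (hadamard_lower \<phi> x h) 0)"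
proof -
  define S where "S = {y. \<phi> y \<le> 0}"
  define T where "T = bouligand_cone S x"
  define f where "f = hadamard_lower \<phi> x"
  define C where "C = {h. f h \<le> 1}"
  have T0: "0 \<in> T" unfolding T_def by (rule cone_zero) (use assms(4) S_def in auto)
  have key: "h \<in> C \<Longrightarrow> dset h T \<le> excess C T" for h
    unfolding excess_def by (auto intro: SUP_upper)
  have "excess C T \<le> ereal \<tau> \<longleftrightarrow> (\<forall>h. dset h T \<le> ereal \<tau> * max (f h) 0)"
  proof
    assume E: "excess C T \<le> ereal \<tau>"
    have A: "f h \<le> 1 \<Longrightarrow> dset h T \<le> ereal \<tau>" for h using key[of h] E C_def by auto
    show "\<forall>h. dset h T \<le> ereal \<tau> * max (f h) 0"
    proof
      fix h
      consider "f h = \<infinity>" | "f h \<le> 0" | r where "f h = ereal r" "r > 0"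
        by (cases "f h") force+
      then show "dset h T \<le> ereal \<tau> * max (f h) 0"
      proof cases
        case 1 then show ?thesis using assms(3) by simp
      next
        case 2
        have "dset h T \<le> 0"
        proof (rule ereal_le_epsilon2)
          fix e :: real assume e: "0 < e"
          define s where "s = \<tau> / e"
          have s: "s > 0" using e assms(3) by (simp add: s_def)
          have "f (s *\<^sub>R h) \<le> ereal s * f h" unfolding f_def by (rule hadamard_scale[OF s])
          also have "\<dots> \<le> ereal s * 0" using 2 s by (intro ereal_mult_left_mono) auto
          finally have "f (s *\<^sub>R h) \<le> 0" by simp
          then have "f (s *\<^sub>R h) \<le> 1" by (rule order_trans) simp
          then have "dset (s *\<^sub>R h) T \<le> ereal \<tau>" by (rule A)
          then have "ereal s * dset h T \<le> ereal \<tau>" using dset_scale[OF s, of h S x] T_def by simp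
          then have "dset h T \<le> ereal (\<tau> / s)" by (rule scale_div[OF s dset_nonneg])
          then show "dset h T \<le> 0 + ereal e" using s e assms(3) by (simp add: s_def)
        qed
        then show ?thesis using 2 by (simp add: max_def)
      next
        case 3
        define s where "s = 1 / r"
        have s: "s > 0" using 3 by (simp add: s_def)
        have "f (s *\<^sub>R h) \<le> ereal s * f h" unfolding f_def by (rule hadamard_scale[OF s])
        also have "\<dots> = 1" using 3 by (simp add: s_def one_ereal_def)
        finally have "dset (s *\<^sub>R h) T \<le> ereal \<tau>" by (rule A)
        then have "ereal s * dset h T \<le> ereal \<tau>" using dset_scale[OF s, of h S x] T_def by simp
        then have "dset h T \<le> ereal (\<tau> / s)" by (rule scale_div[OF s dset_nonneg])
        then show ?thesis using 3 by (simp add: s_def max_def mult.commute)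
      qed
    qed
  next
    assume B: "\<forall>h. dset h T \<le> ereal \<tau> * max (f h) 0"
    show "excess C T \<le> ereal \<tau>"
    proof (cases "C = {}")
      case True then show ?thesis using T0 assms(3) by (auto simp: excess_def)
    next
      case False
      have "dset h T \<le> ereal \<tau>" if "h \<in> C" for h
      proof -
        have "max (f h) 0 \<le> 1" using that C_def by auto
        then have "ereal \<tau> * max (f h) 0 \<le> ereal \<tau> * 1"
          using assms(3) by (intro ereal_mult_left_mono) auto
        then show ?thesis using B[rule_format, of h] by simp
      qed
      then show ?thesis using False unfolding excess_def by (auto intro: SUP_least)
    qed
  qed
  then show ?thesis unfolding S_def T_def f_def C_def .
qed

end
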